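(* Let $\mathbf L=(L,\vee,\wedge,0,1)$ be a complemented lattice with $0\neq 1$ and let $a\in L$. Then: (i) $a\in a^{++}$ and $a^{+++}=a^+$; (ii) the poset $(x^+,\le)$ is an antichain for every $x\in L$ if and only if $\mathbf L$ has no sublattice that is isomorphic to the lattice $\mathbf N_5$ and contains $0$ and $1$; (iii) $(a^+,\le)$ is convex, i.e. if $b,c\in a^+$, $d\in L$ and $b\le d\le c$, then $d\in a^+$; (iv) if the mapping $x\mapsto x^{++}$ from $L$ to $2^L$ is not injective, then $\mathbf L$ does not satisfy the identity $x^{++}=\{x\}$ for all $x\in L$.
   Context: A bounded lattice is complemented if every element $a$ has a complement $b$, i.e. $a\vee b=1$ and $a\wedge b=0$; complements need not be unique. For $a\in L$, $a^+:=\{x\in L\mid a\vee x=1,\ a\wedge x=0\}$ is the set of all complements of $a$. For $A\subseteq L$, $A^+:=\{x\in L\mid a\vee x=1\text{ and }a\wedge x=0\text{ for all }a\in A\}$. Thus $a^{++}=(a^+)^+$ and $a^{+++}=((a^+)^+)^+$. A singleton $\{x\}$ is identified with $x$. $\mathbf N_5$ is the five-element non-modular lattice $\{0,a,b,c,1\}$ with $0<a<c<1$ and $b$ incomparable to $a$ and $c$. *)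

theory Defs
  imports Main
begin

definition complemented :: "'a::bounded_lattice itself \<Rightarrow> bool" where
  "complemented _ \<longleftrightarrow> (\<forall>a::'a. \<exists>b. sup a b = top \<and> inf a b = bot)"

definition comps :: "'a::bounded_lattice \<Rightarrow> 'a set" where
  "comps a = {x. sup a x = top \<and> inf a x = bot}"

definition compsS :: "'a::bounded_lattice set \<Rightarrow> 'a set" where
  "compsS A = {x. \<forall>a\<in>A. sup a x = top \<and> inf a x = bot}"

datatype n5 = N0 | Na | Nb | Nc | N1

fun n5_le :: "n5 \<Rightarrow> n5 \<Rightarrow> bool" where
  "n5_le N0 _ = True"
| "n5_le _ N1 = True"
| "n5_le Na Na = True"
| "n5_le Na Nc = True"
| "n5_le Nb Nb = True"
| "n5_le Nc Nc = True"
| "n5_le _ _ = False"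

definition sublattice :: "'a::lattice set \<Rightarrow> bool" where
  "sublattice S \<longleftrightarrow> (\<forall>x\<in>S. \<forall>y\<in>S. sup x y \<in> S \<and> inf x y \<in> S)"

text \<open>S (with the induced order) is isomorphic to N5; for lattices, order
  isomorphisms are exactly lattice isomorphisms.\<close>
definition iso_N5 :: "'a::lattice set \<Rightarrow> bool" where
  "iso_N5 S \<longleftrightarrow> (\<exists>f::n5 \<Rightarrow> 'a. bij_betw f UNIV S \<and> (\<forall>x y. n5_le x y \<longleftrightarrow> f x \<le> f y))"

end

theory Submission
  imports Defs
begin

lemma part2a:
  fixes x y z :: "'a::bounded_lattice"
  assumes bt: "(bot::'a) \<noteq> top" and y: "y \<in> comps x" and z: "z \<in> comps x"
    and yz: "y \<le> z" and ne: "y \<noteq> z"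
  shows "\<exists>S::'a set. sublattice S \<and> iso_N5 S \<and> bot \<in> S \<and> top \<in> S"
proof -
  have y1: "sup x y = top" "inf x y = bot" and z1: "sup x z = top" "inf x z = bot"
    using y z by (auto simp: comps_def)
  have yb: "y \<noteq> bot"
  proof
    assume "y = bot" then have "x = top" using y1 by simp
    then have "z = bot" using z1 by simp
    then show False using ne \<open>y = bot\<close> by simp
  qed
  have zt: "z \<noteq> top"
  proof
    assume "z = top" then have "x = bot" using z1 by simp
    then have "y = top" using y1 by simp
    then show False using ne \<open>z = top\<close> by simp
  qed
  have yt: "y \<noteq> top" using yz zt by (metis top.extremum_uniqueI)
  have zb: "z \<noteq> bot" using yz yb by (metis bot.extremum_uniqueI)
  have xy1: "\<not> x \<le> y"
  proof
    assume "x \<le> y" then have "x = bot" using y1 by (simp add: inf.absorb1)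
    then show False using y1 yt by simp
  qed
  have xy2: "\<not> y \<le> x"
  proof
    assume "y \<le> x" then have "y = bot" using y1 by (simp add: inf.absorb2)
    then show False using yb by simp
  qed
  have xz1: "\<not> x \<le> z"
  proof
    assume "x \<le> z" then have "x = bot" using z1 by (simp add: inf.absorb1)
    then show False using z1 zt by simp
  qed
  have xz2: "\<not> z \<le> x"
  proof
    assume "z \<le> x" then have "z = bot" using z1 by (simp add: inf.absorb2)
    then show False using zb by simp
  qed
  have zy: "\<not> z \<le> y" using yz ne by auto
  have xb: "x \<noteq> bot" using xy1 by auto
  have xt: "x \<noteq> top" using xy2 by auto
  have tb: "\<not> top \<le> w" if "w \<noteq> top" for w :: 'a using that top.extremum_uniqueI by blast
  have bb: "\<not> w \<le> bot" if "w \<noteq> bot" for w :: 'a using that bot.extremum_uniqueI by blast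
  define f where "f p = (case p of N0 \<Rightarrow> bot | Na \<Rightarrow> y | Nb \<Rightarrow> x | Nc \<Rightarrow> z | N1 \<Rightarrow> top)" for p
  define S where "S = {bot, y, x, z, top::'a}"
  have facts: "\<not> top \<le> x" "\<not> top \<le> y" "\<not> top \<le> z" "\<not> top \<le> (bot::'a)"
     "\<not> x \<le> bot" "\<not> y \<le> bot" "\<not> z \<le> bot"
    using tb bb xt yt zt xb yb zb bt by auto
  have ord: "n5_le p q \<longleftrightarrow> f p \<le> f q" for p q
    by (cases p; cases q) (simp_all only: f_def n5.case n5_le.simps yz xy1 xy2 xz1 xz2 zy facts order_refl bot_least top_greatest)
  have inj: "inj f"
  proof (rule injI)
    fix p q assume "f p = f q"
    then have "f p \<le> f q" "f q \<le> f p" by auto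
    then have "n5_le p q" "n5_le q p" using ord by auto
    then show "p = q" by (cases p; cases q) auto
  qed
  have rng: "range f = S"
  proof
    show "range f \<subseteq> S" by (auto simp: f_def S_def split: n5.splits)
    show "S \<subseteq> range f"
    proof
      fix w assume "w \<in> S"
      then consider "w = f N0" | "w = f Na" | "w = f Nb" | "w = f Nc" | "w = f N1"
        by (auto simp: S_def f_def)
      then show "w \<in> range f" by (metis rangeI)
    qed
  qed
  have "sublattice S"
    unfolding sublattice_def S_def
    using y1 z1 yz by (simp add: sup_commute inf_commute sup.absorb2 inf.absorb1)
  moreover have "iso_N5 S" unfolding iso_N5_def
    using inj rng ord by (metis bij_betw_def)
  ultimately show ?thesis by (auto simp: S_def)
qed

lemma part2b:
  fixes S :: "'a::bounded_lattice set"
  assumes sl: "sublattice S" and iso: "iso_N5 S" and b: "bot \<in> S" and t: "top \<in> S"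
  shows "\<exists>x::'a. \<exists>y\<in>comps x. \<exists>z\<in>comps x. y \<le> z \<and> y \<noteq> z"
proof -
  obtain f :: "n5 \<Rightarrow> 'a" where bij: "bij_betw f UNIV S" and ord: "\<And>p q. n5_le p q \<longleftrightarrow> f p \<le> f q"
    using iso unfolding iso_N5_def by blast
  have rng: "range f = S" and inj: "inj f" using bij by (auto simp: bij_betw_def)
  obtain k where k: "bot = f k" using b rng by blast
  have "n5_le N0 k" by simp
  then have f0: "f N0 = bot" using ord k by (metis bot.extremum_uniqueI)
  obtain m where m: "top = f m" using t rng by blast
  have "n5_le m N1" by (cases m) auto
  then have f1: "f N1 = top" using ord m by (metis top.extremum_uniqueI)
  have sup_ab: "sup (f Nb) w = top" if "w = f Na \<or> w = f Nc" for w
  proof -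
    have "sup (f Nb) w \<in> S" using sl that rng unfolding sublattice_def by blast
    then obtain j where j: "sup (f Nb) w = f j" using rng by blast
    have "n5_le Nb j" using ord j by (metis sup.cobounded1)
    moreover have "n5_le Na j \<or> n5_le Nc j" using ord j that by (metis sup.cobounded2)
    ultimately have "j = N1" by (cases j) auto
    then show ?thesis using j f1 by simp
  qed
  have inf_ab: "inf (f Nb) w = bot" if "w = f Na \<or> w = f Nc" for w
  proof -
    have "inf (f Nb) w \<in> S" using sl that rng unfolding sublattice_def by blast
    then obtain j where j: "inf (f Nb) w = f j" using rng by blast
    have "n5_le j Nb" using ord j by (metis inf.cobounded1)
    moreover have "n5_le j Na \<or> n5_le j Nc" using ord j that by (metis inf.cobounded2)
    ultimately have "j = N0" by (cases j) auto
    then show ?thesis using j f0 by simp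
  qed
  have "f Na \<in> comps (f Nb)" "f Nc \<in> comps (f Nb)"
    using sup_ab inf_ab by (auto simp: comps_def)
  moreover have "f Na \<le> f Nc" using ord[of Na Nc] by simp
  moreover have "f Na \<noteq> f Nc"
  proof
    assume "f Na = f Nc" then have "Na = Nc" using inj by (simp add: inj_eq)
    then show False by simp
  qed
  ultimately show ?thesis by (intro exI[of _ "f Nb"] bexI[of _ "f Na"] bexI[of _ "f Nc"] conjI)
qed

theorem proposition1:
  fixes a :: "'a::bounded_lattice"
  assumes "complemented TYPE('a)"
    and "(bot::'a) \<noteq> top"
  shows "(a \<in> compsS (comps a) \<and> compsS (compsS (comps a)) = comps a)
    \<and> ((\<forall>x::'a. \<forall>y\<in>comps x. \<forall>z\<in>comps x. y \<le> z \<longrightarrow> y = z)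
        \<longleftrightarrow> \<not> (\<exists>S::'a set. sublattice S \<and> iso_N5 S \<and> bot \<in> S \<and> top \<in> S))
    \<and> (\<forall>b\<in>comps a. \<forall>c\<in>comps a. \<forall>d. b \<le> d \<and> d \<le> c \<longrightarrow> d \<in> comps a)
    \<and> (\<not> inj (\<lambda>x::'a. compsS (comps x)) \<longrightarrow> \<not> (\<forall>x::'a. compsS (comps x) = {x}))"
proof (intro conjI)
  show a1: "a \<in> compsS (comps a)" by (auto simp: comps_def compsS_def sup_commute inf_commute)
  show "compsS (compsS (comps a)) = comps a"
  proof
    show "compsS (compsS (comps a)) \<subseteq> comps a"
      using a1 by (auto simp: comps_def compsS_def)
    show "comps a \<subseteq> compsS (compsS (comps a))"
      by (auto simp: compsS_def sup_commute inf_commute)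
  qed
  show "(\<forall>x::'a. \<forall>y\<in>comps x. \<forall>z\<in>comps x. y \<le> z \<longrightarrow> y = z)
        \<longleftrightarrow> \<not> (\<exists>S::'a set. sublattice S \<and> iso_N5 S \<and> bot \<in> S \<and> top \<in> S)"
    using part2a[OF assms(2)] part2b by metis
  show "\<forall>b\<in>comps a. \<forall>c\<in>comps a. \<forall>d. b \<le> d \<and> d \<le> c \<longrightarrow> d \<in> comps a"
  proof (intro ballI allI impI)
    fix b c d assume b: "b \<in> comps a" and c: "c \<in> comps a" and bd: "b \<le> d \<and> d \<le> c"
    have "sup a b \<le> sup a d" using bd by (meson sup_mono order_refl)
    moreover have "sup a b = top" using b by (simp add: comps_def)
    ultimately have 1: "sup a d = top" by (metis top.extremum_uniqueI)
    have "inf a d \<le> inf a c" using bd by (meson inf_mono order_refl)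
    moreover have "inf a c = bot" using c by (simp add: comps_def)
    ultimately have 2: "inf a d = bot" by (metis bot.extremum_uniqueI)
    show "d \<in> comps a" using 1 2 by (simp add: comps_def)
  qed
  show "\<not> inj (\<lambda>x::'a. compsS (comps x)) \<longrightarrow> \<not> (\<forall>x::'a. compsS (comps x) = {x})"
    by (auto simp: inj_def) (metis singleton_inject)
qed

end
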